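(* Let $k\in\mathbb{Z}$, and let $\chi_i$ be a Dirichlet character modulo $q_i$ ($i=1,2$) induced by the primitive character $\chi_i^*$ of modulus $q_i^*\mid q_i$, with $\chi_1(-1)\chi_2(-1)=(-1)^k$. Then for $z\in\mathbb{H}$ and $\mathrm{Re}(s)>1$, \[ E_{\chi_1,\chi_2}(z,s)=\frac{L(2s,\chi_1^*\chi_2^* )}{L(2s,\chi_1\chi_2)}\sum_{a\mid q_1}\sum_{b\mid q_2}\frac{\mu(a)\chi_1^*(a)\mu(b)\chi_2^*(b)}{(ab)^s}\,E_{\chi_1^*,\chi_2^*}\Big(\frac{aq_2}{bq_2^*}z,s\Big). \]
   Context: For Dirichlet characters $\eta_1,\eta_2$ modulo $r_1,r_2$ with $\eta_1(-1)\eta_2(-1)=(-1)^k$, $z=x+iy\in\mathbb{H}$, $\mathrm{Re}(s)>1$, \[ E_{\eta_1,\eta_2}(z,s)=\frac12\sum_{\substack{c,d\in\mathbb{Z}\\ (c,d)=1}}\frac{(r_2y)^s\eta_1(c)\eta_2(d)}{|cr_2z+d|^{2s}}\Big(\frac{|cr_2z+d|}{cr_2z+d}\Big)^k. \] $\mu$ is the Möbius function and $L(s,\chi)$ the Dirichlet $L$-function (of the possibly imprimitive character $\chi_1\chi_2$). *)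

theory Defs
  imports "HOL-Analysis.Analysis" "HOL-Computational_Algebra.Squarefree"
begin

definition dirichlet_char :: "nat \<Rightarrow> (int \<Rightarrow> complex) \<Rightarrow> bool" where
  "dirichlet_char q chi \<longleftrightarrow> q > 0 \<and>
     (\<forall>n. chi (n + int q) = chi n) \<and>
     (\<forall>m n. chi (m * n) = chi m * chi n) \<and>
     (\<forall>n. chi n \<noteq> 0 \<longleftrightarrow> coprime n (int q))"

definition induced_char :: "nat \<Rightarrow> (int \<Rightarrow> complex) \<Rightarrow> nat \<Rightarrow> (int \<Rightarrow> complex) \<Rightarrow> bool" where
  "induced_char q chi q' chi' \<longleftrightarrow> dirichlet_char q chi \<and> dirichlet_char q' chi' \<and> q' dvd q \<and>
     (\<forall>n. chi n = (if coprime n (int q) then chi' n else 0))"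

definition primitive_char :: "nat \<Rightarrow> (int \<Rightarrow> complex) \<Rightarrow> bool" where
  "primitive_char q chi \<longleftrightarrow> dirichlet_char q chi \<and>
     (\<forall>d \<psi>. d < q \<longrightarrow> \<not> induced_char q chi d \<psi>)"

definition moebius_mu :: "nat \<Rightarrow> int" where
  "moebius_mu n = (if n = 0 \<or> \<not> squarefree n then 0 else (-1) ^ card (prime_factors n))"

definition dirichlet_L :: "(int \<Rightarrow> complex) \<Rightarrow> complex \<Rightarrow> complex" where
  "dirichlet_L chi s = (\<Sum>n. chi (int (Suc n)) / (of_nat (Suc n) powr s))"

text \<open>Eisenstein series E_{eta1,eta2}(z,s) of weight k with parameter r2 (modulus of eta2).\<close>
definition eisenstein :: "int \<Rightarrow> nat \<Rightarrow> (int \<Rightarrow> complex) \<Rightarrow> (int \<Rightarrow> complex) \<Rightarrow> complex \<Rightarrow> complex \<Rightarrow> complex" where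
  "eisenstein k r2 \<eta>1 \<eta>2 z s =
     (1/2) * infsum (\<lambda>(c :: int, d :: int).
        (let w = of_int c * of_nat r2 * z + of_int d in
          complex_of_real (real r2 * Im z) powr s * \<eta>1 c * \<eta>2 d
            / (complex_of_real (cmod w) powr (2 * s))
            * (complex_of_real (cmod w) / w) powi k))
       {(c, d). coprime c d}"

end

theory Submission
  imports Defs
begin


lemma alt_pow_sum:
  assumes "finite P"
  shows "(\<Sum>S\<in>Pow P. (-1::int) ^ card S) = (if P = {} then 1 else 0)"
  using assms
proof (induction P rule: finite_induct)
  case empty then show ?case by simp
next
  case (insert x F)
  have d: "Pow F \<inter> insert x ` Pow F = {}" using insert by auto
  have inj: "inj_on (insert x) (Pow F)" using insert unfolding inj_on_def by (metis Pow_iff insert_absorb insert_ident subset_iff)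
  have "(\<Sum>S\<in>Pow (insert x F). (-1::int) ^ card S) = (\<Sum>S\<in>Pow F. (-1::int) ^ card S) + (\<Sum>S\<in>insert x ` Pow F. (-1::int) ^ card S)"
    unfolding Pow_insert using insert d by (intro sum.union_disjoint) auto
  also have "(\<Sum>S\<in>insert x ` Pow F. (-1::int) ^ card S) = (\<Sum>S\<in>Pow F. (-1::int) ^ card (insert x S))"
    using inj by (simp add: sum.reindex)
  also have "\<dots> = (\<Sum>S\<in>Pow F. - ((-1::int) ^ card S))"
  proof (intro sum.cong refl)
    fix S assume "S \<in> Pow F"
    then have "finite S" "x \<notin> S" using insert finite_subset by auto
    then show "(-1::int) ^ card (insert x S) = - ((-1::int) ^ card S)" by simp
  qed
  finally show ?case by (simp add: sum_negf)
qed

lemma moebius_sum: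
  assumes "m > 0"
  shows "(\<Sum>a | a dvd m. moebius_mu a) = (if m = 1 then 1 else 0)"
proof -
  define P where "P = prime_factors m"
  define D where "D = {a. a dvd m \<and> squarefree a}"
  have finP: "finite P" unfolding P_def by simp
  have fin: "finite {a. a dvd m}" using assms by (simp add: finite_divisors_nat)
  have "(\<Sum>a | a dvd m. moebius_mu a) = (\<Sum>a\<in>D. moebius_mu a)"
    unfolding D_def using fin by (intro sum.mono_neutral_right) (auto simp: moebius_mu_def)
  also have "\<dots> = (\<Sum>a\<in>D. (-1) ^ card (prime_factors a))"
    unfolding D_def by (intro sum.cong refl) (auto simp: moebius_mu_def intro!: Nat.gr0I)
  also have "\<dots> = (\<Sum>S\<in>Pow P. (-1) ^ card (prime_factors (\<Prod>S)))"
  proof (rule sum.reindex_bij_betw[symmetric])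
    have pf: "prime_factors (\<Prod>S) = S" if "S \<subseteq> P" for S
    proof -
      have "finite S" using that finP finite_subset by auto
      moreover have "\<forall>p\<in>S. prime p" using that unfolding P_def by auto
      ultimately show ?thesis by (subst prime_factors_prod) (auto simp: prime_factorization_prime)
    qed
    have pd: "\<Prod>P dvd m"
    proof -
      have "\<Prod>P = (\<Prod>p\<in>P. p ^ 1)" by simp
      also have "\<dots> dvd (\<Prod>p\<in>P. p ^ multiplicity p m)"
        by (intro prod_dvd_prod le_imp_power_dvd) (auto simp: P_def prime_factors_multiplicity)
      also have "\<dots> = m" unfolding P_def using assms by (rule prime_factorization_nat[symmetric])
      finally show ?thesis .
    qed
    show "bij_betw Prod (Pow P) D"
    proof (rule bij_betw_byWitness[where f' = prime_factors])
      show "\<forall>S\<in>Pow P. prime_factors (\<Prod>S) = S" using pf by auto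
      show "\<forall>a\<in>D. \<Prod>(prime_factors a) = a"
      proof
        fix a assume "a \<in> D"
        then have a0: "a \<noteq> 0" and sf: "squarefree a" using D_def assms by auto
        have "a = (\<Prod>p\<in>prime_factors a. p ^ multiplicity p a)" using a0 by (intro prime_factorization_nat) simp
        also have "\<dots> = (\<Prod>p\<in>prime_factors a. p)"
          using sf a0 by (intro prod.cong refl) (auto simp: squarefree_factorial_semiring')
        finally show "\<Prod>(prime_factors a) = a" by simp
      qed
      show "Prod ` Pow P \<subseteq> D"
      proof
        fix x assume "x \<in> Prod ` Pow P"
        then obtain S where S: "S \<subseteq> P" "x = \<Prod>S" by auto
        have fS: "finite S" using S finP finite_subset by auto
        have pr: "\<forall>p\<in>S. prime p" using S unfolding P_def by auto
        have "\<Prod>S dvd \<Prod>P" using S finP by (intro prod_dvd_prod_subset) auto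
        with pd have "x dvd m" using S by (auto intro: dvd_trans)
        moreover have "squarefree x" unfolding S(2)
          using pr by (intro squarefree_prod_coprime) (auto intro: primes_coprime squarefree_prime)
        ultimately show "x \<in> D" unfolding D_def by auto
      qed
      show "prime_factors ` D \<subseteq> Pow P"
        unfolding D_def P_def using assms by (auto intro: dvd_prime_factors[THEN subsetD])
    qed
  qed
  also have "\<dots> = (\<Sum>S\<in>Pow P. (-1) ^ card S)"
  proof (intro sum.cong refl)
    fix S assume "S \<in> Pow P"
    then have "finite S" "\<forall>p\<in>S. prime p" using finP finite_subset unfolding P_def by auto
    then show "(-1::int) ^ card (prime_factors (\<Prod>S)) = (-1) ^ card S"
      by (subst prime_factors_prod) (auto simp: prime_factorization_prime)
  qed
  also have "\<dots> = (if P = {} then 1 else 0)" by (rule alt_pow_sum[OF finP])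
  also have "(P = {}) = (m = 1)" unfolding P_def using assms
    by (simp add: prime_factorization_empty_iff)
  finally show ?thesis .
qed

section \<open>Characters\<close>

lemma dc_1: assumes "dirichlet_char q chi" shows "chi 1 = 1"
proof -
  have "chi 1 = chi 1 * chi 1" using assms unfolding dirichlet_char_def by (metis mult_1)
  moreover have "chi 1 \<noteq> 0" using assms unfolding dirichlet_char_def by simp
  ultimately show ?thesis by (metis mult_cancel_left2)
qed

lemma dc_mult: assumes "dirichlet_char q chi" shows "chi (m * n) = chi m * chi n"
  using assms unfolding dirichlet_char_def by blast

lemma dc_pow: assumes "dirichlet_char q chi" shows "chi (n ^ j) = chi n ^ j"
  by (induction j) (auto simp: dc_1[OF assms] dc_mult[OF assms])

lemma dc_periodic: assumes "dirichlet_char q chi" shows "chi (n + m * int q) = chi n"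
proof -
  have p: "chi (x + int q) = chi x" for x using assms unfolding dirichlet_char_def by blast
  have pos: "chi (x + int j * int q) = chi x" for x j
  proof (induction j)
    case (Suc j)
    have "chi (x + int (Suc j) * int q) = chi ((x + int j * int q) + int q)" by (simp add: algebra_simps)
    also have "\<dots> = chi x" using p Suc by simp
    finally show ?case .
  qed simp
  have neg: "chi (x - int j * int q) = chi x" for x j
    using pos[of "x - int j * int q" j] by simp
  show ?thesis
  proof (cases "m \<ge> 0")
    case True then show ?thesis using pos[of n "nat m"] by simp
  next
    case False then show ?thesis using neg[of n "nat (-m)"] by simp
  qed
qed

lemma dc_mod: assumes "dirichlet_char q chi" shows "chi n = chi (n mod int q)"
  using dc_periodic[OF assms, of "n mod int q" "n div int q"] by (simp add: mult.commute)

lemma dc_bound: assumes "dirichlet_char q chi" shows "norm (chi n) \<le> 1"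
proof (rule ccontr)
  assume "\<not> norm (chi n) \<le> 1"
  then have gt: "norm (chi n) > 1" by simp
  have q0: "q > 0" using assms unfolding dirichlet_char_def by simp
  define M where "M = Max ((\<lambda>x. norm (chi x)) ` {0..<int q})"
  have bnd: "norm (chi x) \<le> M" for x
  proof -
    have "x mod int q \<in> {0..<int q}" using q0 by simp
    then have "norm (chi (x mod int q)) \<le> M" unfolding M_def by (intro Max_ge) auto
    then show ?thesis using dc_mod[OF assms, of x] by simp
  qed
  obtain j where "M < norm (chi n) ^ j" using real_arch_pow[OF gt] by blast
  also have "\<dots> = norm (chi (n ^ j))" by (simp add: dc_pow[OF assms] norm_power)
  finally show False using bnd[of "n ^ j"] by simp
qed

lemma induced_expand:
  assumes "induced_char q chi q' chi'"
  shows "chi n = (\<Sum>a | a dvd q. if int a dvd n then of_int (moebius_mu a) * chi' (int a) * chi' (n div int a) else 0)"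
proof -
  have dc: "dirichlet_char q' chi'" and q0: "q > 0" and eq: "chi n = (if coprime n (int q) then chi' n else 0)"
    using assms unfolding induced_char_def dirichlet_char_def by auto
  define g where "g = gcd (nat \<bar>n\<bar>) q"
  have g0: "g > 0" using q0 unfolding g_def by simp
  have gd: "a dvd g \<longleftrightarrow> a dvd nat \<bar>n\<bar> \<and> a dvd q" for a by (simp only: g_def gcd_greatest_iff)
  have set: "{a. a dvd q \<and> int a dvd n} = {a. a dvd g}"
    unfolding gd by (auto simp: dvd_nat_abs_iff)
  have fin: "finite {a. a dvd q}" using q0 by (simp add: finite_divisors_nat)
  have "(\<Sum>a | a dvd q. if int a dvd n then of_int (moebius_mu a) * chi' (int a) * chi' (n div int a) else 0)
      = (\<Sum>a | a dvd q. if int a dvd n then of_int (moebius_mu a) * chi' n else 0)"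
  proof (intro sum.cong refl)
    fix a assume "a \<in> {a. a dvd q}"
    show "(if int a dvd n then of_int (moebius_mu a) * chi' (int a) * chi' (n div int a) else 0)
      = (if int a dvd n then of_int (moebius_mu a) * chi' n else 0)"
      using dc_mult[OF dc, of "int a" "n div int a"] by auto
  qed
  also have "\<dots> = (\<Sum>a\<in>{a. a dvd q \<and> int a dvd n}. of_int (moebius_mu a) * chi' n)"
    using fin by (intro sum.mono_neutral_cong_right) auto
  also have "\<dots> = of_int (\<Sum>a | a dvd g. moebius_mu a) * chi' n"
    unfolding set by (simp add: sum_distrib_right)
  also have "\<dots> = (if g = 1 then chi' n else 0)" using moebius_sum[OF g0] by simp
  also have "(g = 1) = coprime n (int q)" unfolding g_def
    by (metis coprime_iff_gcd_eq_1 coprime_nat_abs_left_iff coprime_int_iff)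
  finally show ?thesis using eq by simp
qed



section \<open>Kernel\<close>

definition ker :: "int \<Rightarrow> complex \<Rightarrow> complex \<Rightarrow> complex" where
  "ker k s w = 1 / (complex_of_real (cmod w) powr (2 * s)) * (complex_of_real (cmod w) / w) powi k"

lemma cpowr_mult:
  assumes "x \<ge> 0" "y \<ge> 0"
  shows "complex_of_real (x * y) powr s = complex_of_real x powr s * complex_of_real y powr s"
  using assms by (simp add: powr_times_real_left)

lemma ker_scale:
  assumes "t > 0"
  shows "ker k s (complex_of_real t * w) = ker k s w / (complex_of_real t powr (2 * s))"
proof -
  have n: "cmod (complex_of_real t * w) = t * cmod w" using assms by (simp add: norm_mult)
  have "complex_of_real (t * cmod w) / (complex_of_real t * w) = complex_of_real (cmod w) / w"
    using assms by simp
  then show ?thesis unfolding ker_def n cpowr_mult[OF less_imp_le[OF assms] norm_ge_zero]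
    by simp
qed

lemma ker_norm:
  "norm (ker k s w) = cmod w powr (- 2 * Re s)"
proof (cases "w = 0")
  case True then show ?thesis by (simp add: ker_def)
next
  case False
  have "norm (complex_of_real (cmod w) powr (2 * s)) = cmod w powr (2 * Re s)"
    by (subst norm_powr_real_powr) auto
  moreover have "norm ((complex_of_real (cmod w) / w) powi k) = 1"
    using False by (simp add: norm_power_int norm_divide)
  ultimately show ?thesis unfolding ker_def
    by (simp add: norm_mult norm_divide norm_inverse powr_minus divide_inverse)
qed

section \<open>Lower bound for the quadratic form\<close>

lemma quad_real:
  fixes c d x y :: real
  assumes "y > 0"
  shows "y^2 / (2 * (1 + x^2 + y^2)) * (c^2 + d^2) \<le> (c*x+d)^2 + (c*y)^2"
proof -
  define D where "D = 1 + x^2 + y^2"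
  define u where "u = c*x + d"
  have D0: "D > 0" unfolding D_def by (simp add: add_pos_nonneg)
  have e1: "2*u^2 + 2*(c^2*x^2) - d^2 = (u + c*x)^2" unfolding u_def by (simp add: power2_eq_square algebra_simps)
  have h1: "d^2 \<le> 2*u^2 + 2*(c^2*x^2)" using e1 by (smt (verit) zero_le_power2)
  have h2: "y^2 * (c^2+d^2) \<le> y^2 * (c^2 + 2*u^2 + 2*(c^2*x^2))"
    using h1 by (intro mult_left_mono) auto
  have a1: "2*y^2*u^2 \<le> 2*D*u^2" unfolding D_def by (intro mult_right_mono) auto
  have a2: "(1+2*x^2)*(c^2*y^2) \<le> 2*D*(c^2*y^2)" unfolding D_def by (intro mult_right_mono) auto
  have "y^2 * (c^2 + 2*u^2 + 2*(c^2*x^2)) = 2*y^2*u^2 + (1+2*x^2)*(c^2*y^2)" by (simp add: algebra_simps)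
  with h2 a1 a2 have "y^2 * (c^2+d^2) \<le> 2*D*(u^2 + (c*y)^2)" by (simp add: algebra_simps power_mult_distrib)
  then have "y^2 * (c^2+d^2) / (2*D) \<le> u^2 + (c*y)^2" using D0 by (simp add: pos_divide_le_eq mult.commute)
  then show ?thesis unfolding u_def D_def by (simp add: mult.commute)
qed

lemma int_sq_bound:
  fixes a b :: int
  assumes "(a, b) \<noteq> (0, 0)"
  shows "(\<bar>a\<bar>+1) * (\<bar>b\<bar>+1) \<le> 3 * (a^2 + b^2)"
proof -
  have sq: "\<bar>t\<bar> \<le> t^2" for t :: int
  proof (cases "t = 0")
    case False
    then have "\<bar>t\<bar> * 1 \<le> \<bar>t\<bar> * \<bar>t\<bar>" by (intro mult_left_mono) auto
    then show ?thesis by (simp add: power2_eq_square abs_mult_self)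
  qed simp
  have sa: "\<bar>a\<bar> \<le> a^2" and sb: "\<bar>b\<bar> \<le> b^2" using sq by auto
  have ab: "2 * (\<bar>a\<bar> * \<bar>b\<bar>) \<le> a^2 + b^2"
  proof -
    have "0 \<le> (\<bar>a\<bar> - \<bar>b\<bar>)^2" by simp
    then show ?thesis by (simp add: power2_eq_square algebra_simps abs_mult_self)
  qed
  have one: "1 \<le> a^2 + b^2" using assms
    by (metis add.commute add_0 add_increasing2 int_one_le_iff_zero_less zero_le_power2 zero_less_power2 prod.inject)
  have "(\<bar>a\<bar>+1) * (\<bar>b\<bar>+1) = \<bar>a\<bar> * \<bar>b\<bar> + \<bar>a\<bar> + \<bar>b\<bar> + 1" by (simp add: algebra_simps)
  then show ?thesis using sa sb ab one by (smt (verit))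
qed

lemma quad_bound:
  assumes "Im z > 0"
  shows "\<exists>e::real. e > 0 \<and> (\<forall>c d :: int. (c, d) \<noteq> (0, 0) \<longrightarrow> e * ((\<bar>real_of_int c\<bar>+1) * (\<bar>real_of_int d\<bar>+1)) \<le> (cmod (of_int c * z + of_int d))^2)"
proof -
  define x y where "x = Re z" and "y = Im z"
  define e0 where "e0 = y^2 / (2 * (1 + x^2 + y^2))"
  have e0: "e0 > 0" unfolding e0_def y_def using assms by (intro divide_pos_pos) (auto simp: add_pos_nonneg)
  show ?thesis
  proof (intro exI[of _ "e0 / 3"] conjI allI impI)
    show "e0 / 3 > 0" using e0 by simp
    fix c d :: int assume cd: "(c, d) \<noteq> (0, 0)"
    have "real_of_int ((\<bar>c\<bar>+1) * (\<bar>d\<bar>+1)) \<le> real_of_int (3 * (c^2 + d^2))"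
      using int_sq_bound[OF cd] by linarith
    then have r: "(\<bar>real_of_int c\<bar>+1) * (\<bar>real_of_int d\<bar>+1) \<le> 3 * ((real_of_int c)^2 + (real_of_int d)^2)" by simp
    have "e0 / 3 * ((\<bar>real_of_int c\<bar>+1) * (\<bar>real_of_int d\<bar>+1)) \<le> e0 / 3 * (3 * ((real_of_int c)^2 + (real_of_int d)^2))"
      using r e0 by (intro mult_left_mono) auto
    also have "\<dots> = e0 * ((real_of_int c)^2 + (real_of_int d)^2)" by simp
    also have "\<dots> \<le> (real_of_int c * x + real_of_int d)^2 + (real_of_int c * y)^2"
      unfolding e0_def using quad_real assms y_def by blast
    also have "\<dots> = (cmod (of_int c * z + of_int d))^2" unfolding cmod_power2 x_def y_def by simp
    finally show "e0 / 3 * ((\<bar>real_of_int c\<bar>+1) * (\<bar>real_of_int d\<bar>+1)) \<le> (cmod (of_int c * z + of_int d))^2" .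
  qed
qed

section \<open>Summability\<close>

lemma summable_g_int:
  assumes "\<sigma> > 1"
  shows "(\<lambda>c::int. (\<bar>real_of_int c\<bar> + 1) powr (-\<sigma>)) summable_on UNIV"
proof -
  define g where "g = (\<lambda>c::int. (\<bar>real_of_int c\<bar> + 1) powr (-\<sigma>))"
  have s0: "summable (\<lambda>n. real n powr (-\<sigma>))" using assms by (simp add: summable_real_powr_iff)
  have s1: "summable (\<lambda>n. real (Suc n) powr (-\<sigma>))" using s0 by (subst summable_Suc_iff)
  have "(\<lambda>n. real (Suc n) powr (-\<sigma>)) summable_on UNIV"
    using s1 by (subst summable_on_UNIV_nonneg_real_iff) auto
  moreover have "(g \<circ> int) = (\<lambda>n. real (Suc n) powr (-\<sigma>))" unfolding g_def by (auto simp: add.commute)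
  moreover have "(g \<circ> (\<lambda>n. - int n)) = (\<lambda>n. real (Suc n) powr (-\<sigma>))" unfolding g_def by (auto simp: add.commute)
  ultimately have A: "g summable_on range int" and B: "g summable_on range (\<lambda>n. - int n)"
    by (simp_all add: summable_on_reindex inj_on_def)
  have "UNIV = range int \<union> range (\<lambda>n. - int n)"
  proof (intro set_eqI iffI)
    fix c :: int assume "c \<in> UNIV"
    show "c \<in> range int \<union> range (\<lambda>n. - int n)"
    proof (cases "c \<ge> 0")
      case True then have "c = int (nat c)" by simp
      then show ?thesis by blast
    next
      case False then have "c = - int (nat (-c))" by simp
      then show ?thesis by blast
    qed
  qed auto
  then show ?thesis using summable_on_union[OF A B] unfolding g_def by simp
qed

lemma summable_g_prod:
  assumes "\<sigma> > 1"
  shows "(\<lambda>(c::int, d::int). (\<bar>real_of_int c\<bar> + 1) powr (-\<sigma>) * ((\<bar>real_of_int d\<bar> + 1) powr (-\<sigma>))) summable_on UNIV"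
proof -
  define g where "g = (\<lambda>c::int. (\<bar>real_of_int c\<bar> + 1) powr (-\<sigma>))"
  have sg: "g summable_on UNIV" unfolding g_def by (rule summable_g_int[OF assms])
  have "(\<lambda>(c, d). g c * g d) summable_on Sigma UNIV (\<lambda>_. UNIV)"
  proof (rule summable_on_SigmaI[where g = "\<lambda>c. g c * infsum g UNIV"])
    fix c :: int assume "c \<in> UNIV"
    show "((\<lambda>d. (\<lambda>(c, d). g c * g d) (c, d)) has_sum g c * infsum g UNIV) UNIV"
      using has_sum_cmult_right[OF has_sum_infsum[OF sg], of "g c"] by simp
  next
    show "(\<lambda>c. g c * infsum g UNIV) summable_on UNIV" using sg by (rule summable_on_cmult_left)
  next
    fix c d :: int show "0 \<le> (\<lambda>(c, d). g c * g d) (c, d)" unfolding g_def by simp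
  qed
  then show ?thesis unfolding g_def by simp
qed

definition NZ :: "(int \<times> int) set" where "NZ = UNIV - {(0, 0)}"

lemma summable_lattice:
  assumes "Im z > 0" "\<sigma> > 1"
  shows "(\<lambda>(c::int, d::int). cmod (of_int c * z + of_int d) powr (-2 * \<sigma>)) summable_on NZ"
proof -
  obtain e where e: "e > 0"
    "\<And>c d :: int. (c, d) \<noteq> (0, 0) \<Longrightarrow> e * ((\<bar>real_of_int c\<bar>+1) * (\<bar>real_of_int d\<bar>+1)) \<le> (cmod (of_int c * z + of_int d))^2"
    using quad_bound[OF assms(1)] by blast
  define G where "G = (\<lambda>(c::int, d::int). e powr (-\<sigma>) * ((\<bar>real_of_int c\<bar> + 1) powr (-\<sigma>) * ((\<bar>real_of_int d\<bar> + 1) powr (-\<sigma>))))"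
  have "G summable_on UNIV" unfolding G_def
    using summable_on_cmult_right[OF summable_g_prod[OF assms(2)], of "e powr (-\<sigma>)"]
    by (simp add: case_prod_unfold)
  then have sG: "G summable_on NZ" by (rule summable_on_subset) (auto simp: NZ_def)
  show ?thesis
  proof (rule summable_on_comparison_test[OF sG])
    fix p assume "p \<in> NZ"
    then obtain c d where p: "p = (c, d)" "(c, d) \<noteq> (0, 0)" unfolding NZ_def by (cases p) auto
    define P where "P = (\<bar>real_of_int c\<bar> + 1) * (\<bar>real_of_int d\<bar> + 1)"
    have P0: "P > 0" unfolding P_def by (simp add: add_pos_nonneg)
    have ep: "e * P > 0" using e(1) P0 by simp
    have le: "e * P \<le> (cmod (of_int c * z + of_int d))^2" using e(2)[OF p(2)] unfolding P_def by simp
    have "((cmod (of_int c * z + of_int d))^2) powr (-\<sigma>) = (cmod (of_int c * z + of_int d) powr 2) powr (-\<sigma>)"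
      by simp
    also have "\<dots> = cmod (of_int c * z + of_int d) powr (2 * (-\<sigma>))" by (rule powr_powr)
    finally have "cmod (of_int c * z + of_int d) powr (-2 * \<sigma>) = ((cmod (of_int c * z + of_int d))^2) powr (-\<sigma>)"
      by simp
    also have "\<dots> \<le> (e * P) powr (-\<sigma>)" using assms(2) ep le by (intro powr_mono2') auto
    also have "\<dots> = G p" unfolding G_def p P_def by (simp add: powr_mult)
    finally show "(\<lambda>(c, d). cmod (of_int c * z + of_int d) powr (-2 * \<sigma>)) p \<le> G p" using p by simp
    show "0 \<le> (\<lambda>(c, d). cmod (of_int c * z + of_int d) powr (-2 * \<sigma>)) p" by (simp add: p)
  qed
qed



lemma has_sum_finite_sum:
  fixes f :: "'i \<Rightarrow> 'a \<Rightarrow> complex"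
  assumes "finite I" "\<And>i. i \<in> I \<Longrightarrow> (f i has_sum S i) A"
  shows "((\<lambda>x. \<Sum>i\<in>I. f i x) has_sum (\<Sum>i\<in>I. S i)) A"
  using assms
proof (induction I rule: finite_induct)
  case empty then show ?case by simp
next
  case (insert j I)
  have "((\<lambda>x. f j x + (\<Sum>i\<in>I. f i x)) has_sum (S j + (\<Sum>i\<in>I. S i))) A"
    using insert by (intro has_sum_add) auto
  then show ?case using insert by simp
qed

definition Cop :: "(int \<times> int) set" where "Cop = {(c, d). coprime c d}"

lemma Cop_NZ: "Cop \<subseteq> NZ" unfolding Cop_def NZ_def by auto

definition Tm :: "int \<Rightarrow> complex \<Rightarrow> (int \<Rightarrow> complex) \<Rightarrow> (int \<Rightarrow> complex) \<Rightarrow> complex \<Rightarrow> int \<times> int \<Rightarrow> complex" where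
  "Tm k s e1 e2 w0 p = e1 (fst p) * e2 (snd p) * ker k s (of_int (fst p) * w0 + of_int (snd p))"

lemma Tm_summable:
  assumes "Im w0 > 0" "Re s > 1" "\<And>n. norm (e1 n) \<le> 1" "\<And>n. norm (e2 n) \<le> 1"
  shows "Tm k s e1 e2 w0 summable_on NZ"
proof -
  define G where "G = (\<lambda>(c::int, d::int). cmod (of_int c * w0 + of_int d) powr (- 2 * Re s))"
  have "G summable_on NZ" unfolding G_def by (rule summable_lattice[OF assms(1,2)])
  then have sG: "(\<lambda>p. norm (G p)) summable_on NZ"
    by (rule summable_on_cong[THEN iffD1, rotated]) (auto simp: G_def)
  have "(\<lambda>p. norm (Tm k s e1 e2 w0 p)) summable_on NZ"
  proof (rule Infinite_Sum.abs_summable_on_comparison_test[OF sG])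
    fix p assume "p \<in> NZ"
    obtain c d where p: "p = (c, d)" by (cases p)
    have "norm (Tm k s e1 e2 w0 p) = norm (e1 c) * norm (e2 d) * cmod (of_int c * w0 + of_int d) powr (- 2 * Re s)"
      unfolding Tm_def p by (simp add: norm_mult ker_norm)
    also have "\<dots> \<le> 1 * 1 * cmod (of_int c * w0 + of_int d) powr (- 2 * Re s)"
      using assms(3,4) by (intro mult_right_mono mult_mono) auto
    finally show "norm (Tm k s e1 e2 w0 p) \<le> norm (G p)"
      using p by (simp add: G_def)
  qed
  then show ?thesis by (simp add: summable_on_iff_abs_summable_on_complex)
qed

lemma gcd_decomp:
  fixes f :: "int \<times> int \<Rightarrow> complex" and \<phi> :: "nat \<Rightarrow> complex"
  assumes sf: "f summable_on NZ"
    and hom: "\<And>n c d. f (int (Suc n) * c, int (Suc n) * d) = \<phi> n * f (c, d)"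
    and s\<phi>: "\<phi> summable_on UNIV"
  shows "infsum f NZ = (\<Sum>n. \<phi> n) * infsum f Cop"
proof -
  define F where "F = (\<lambda>(n, p). \<phi> n * f p)"
  define j where "j = (\<lambda>(n::nat, (c::int, d::int)). (int (Suc n) * c, int (Suc n) * d))"
  define i where "i = (\<lambda>(c::int, d::int). (nat (gcd c d) - 1, (c div gcd c d, d div gcd c d)))"
  have hs: "(F has_sum infsum f NZ) (UNIV \<times> Cop) = (f has_sum infsum f NZ) NZ"
  proof (rule has_sum_reindex_bij_witness[where i = i and j = j])
    fix a :: "nat \<times> (int \<times> int)" assume "a \<in> UNIV \<times> Cop"
    then obtain n c d where a: "a = (n, (c, d))" "coprime c d" unfolding Cop_def by auto
    have g: "gcd (int (Suc n) * c) (int (Suc n) * d) = int (Suc n)"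
      using gcd_mult_distrib_int[of "int (Suc n)" c d] a(2) by simp
    have g': "gcd ((1 + int n) * c) ((1 + int n) * d) = 1 + int n" using g by simp
    show "i (j a) = a" unfolding a i_def j_def by (simp add: g')
    have "(c, d) \<noteq> (0, 0)" using a(2) by auto
    then show "j a \<in> NZ" unfolding a j_def NZ_def by auto
    show "f (j a) = F a" unfolding a j_def F_def using hom by simp
  next
    fix b :: "int \<times> int" assume "b \<in> NZ"
    then obtain c d where b: "b = (c, d)" "c \<noteq> 0 \<or> d \<noteq> 0" unfolding NZ_def by (cases b) auto
    have g0: "gcd c d > 0" using b(2) by auto
    have "int (Suc (nat (gcd c d) - 1)) = gcd c d" using g0 by simp
    then show "j (i b) = b" unfolding b i_def j_def by simp
    show "i b \<in> UNIV \<times> Cop" unfolding b i_def Cop_def using div_gcd_coprime[OF b(2)] by simp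
  qed simp
  have hF: "(F has_sum infsum f NZ) (UNIV \<times> Cop)" using hs sf by simp
  then have sF: "F summable_on Sigma UNIV (\<lambda>_. Cop)" by (auto simp: summable_on_def)
  have "infsum f NZ = infsum F (Sigma UNIV (\<lambda>_. Cop))" using hF by (simp add: infsumI)
  also have "\<dots> = infsum (\<lambda>n. infsum (\<lambda>p. F (n, p)) Cop) UNIV"
    by (rule infsum_Sigma_banach[OF sF, symmetric])
  also have "\<dots> = infsum (\<lambda>n. \<phi> n * infsum f Cop) UNIV"
    unfolding F_def by (simp add: infsum_cmult_right')
  also have "\<dots> = infsum \<phi> UNIV * infsum f Cop" by (rule infsum_cmult_left')
  also have "infsum \<phi> UNIV = (\<Sum>n. \<phi> n)"
    using has_sum_imp_sums[OF has_sum_infsum[OF s\<phi>]] by (simp add: sums_iff)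
  finally show ?thesis .
qed

lemma scale_sum:
  fixes F :: "int \<times> int \<Rightarrow> complex" and a b :: nat
  assumes "a > 0" "b > 0"
  shows "infsum (\<lambda>(c, d). if int a dvd c \<and> int b dvd d then F (c div int a, d div int b) else 0) NZ = infsum F NZ"
    and "F summable_on NZ \<Longrightarrow> (\<lambda>(c, d). if int a dvd c \<and> int b dvd d then F (c div int a, d div int b) else 0) summable_on NZ"
proof -
  define D where "D = {(c, d). (c, d) \<in> NZ \<and> int a dvd c \<and> int b dvd d}"
  define h where "h = (\<lambda>(c, d). F (c div int a, d div int b))"
  have w1: "\<And>p. p \<in> NZ \<Longrightarrow> (\<lambda>(c, d). (c div int a, d div int b)) ((\<lambda>(c, d). (int a * c, int b * d)) p) = p"
    using assms by auto
  have w2: "\<And>p. p \<in> NZ \<Longrightarrow> (\<lambda>(c, d). (int a * c, int b * d)) p \<in> D"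
    using assms unfolding D_def NZ_def by auto
  have w3: "\<And>p. p \<in> D \<Longrightarrow> (\<lambda>(c, d). (int a * c, int b * d)) ((\<lambda>(c, d). (c div int a, d div int b)) p) = p"
    unfolding D_def by auto
  have w4: "\<And>p. p \<in> D \<Longrightarrow> (\<lambda>(c, d). (c div int a, d div int b)) p \<in> NZ"
    unfolding D_def NZ_def by auto
  have w5: "\<And>p. p \<in> NZ \<Longrightarrow> h ((\<lambda>(c, d). (int a * c, int b * d)) p) = F p"
    unfolding h_def using assms by auto
  have e1: "infsum F NZ = infsum h D"
    apply (rule infsum_reindex_bij_witness[of NZ "\<lambda>(c, d). (c div int a, d div int b)" "\<lambda>(c, d). (int a * c, int b * d)" D h F])
    using w1 w2 w3 w4 w5 by blast+
  have e2: "infsum h D = infsum (\<lambda>(c, d). if int a dvd c \<and> int b dvd d then F (c div int a, d div int b) else 0) NZ"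
  proof (rule infsum_cong_neutral)
    fix p assume "p \<in> NZ - D"
    then show "(\<lambda>(c, d). if int a dvd c \<and> int b dvd d then F (c div int a, d div int b) else 0) p = 0"
      by (cases p) (auto simp: D_def)
  next
    fix p assume "p \<in> D \<inter> NZ"
    then show "h p = (\<lambda>(c, d). if int a dvd c \<and> int b dvd d then F (c div int a, d div int b) else 0) p"
      by (cases p) (simp add: D_def h_def)
  qed (auto simp: D_def)
  show "infsum (\<lambda>(c, d). if int a dvd c \<and> int b dvd d then F (c div int a, d div int b) else 0) NZ = infsum F NZ"
    using e1 e2 by simp
  assume "F summable_on NZ"
  moreover have "F summable_on NZ \<longleftrightarrow> h summable_on D"
    apply (rule summable_on_reindex_bij_witness[of NZ "\<lambda>(c, d). (c div int a, d div int b)" "\<lambda>(c, d). (int a * c, int b * d)" D h F])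
    using w1 w2 w3 w4 w5 by blast+
  ultimately have "h summable_on D" by simp
  moreover have "h summable_on D \<longleftrightarrow> (\<lambda>(c, d). if int a dvd c \<and> int b dvd d then F (c div int a, d div int b) else 0) summable_on NZ"
  proof (rule summable_on_cong_neutral)
    fix p assume "p \<in> NZ - D"
    then show "(\<lambda>(c, d). if int a dvd c \<and> int b dvd d then F (c div int a, d div int b) else 0) p = 0"
      by (cases p) (auto simp: D_def)
  next
    fix p assume "p \<in> D \<inter> NZ"
    then show "h p = (\<lambda>(c, d). if int a dvd c \<and> int b dvd d then F (c div int a, d div int b) else 0) p"
      by (cases p) (simp add: D_def h_def)
  qed (auto simp: D_def)
  ultimately show "(\<lambda>(c, d). if int a dvd c \<and> int b dvd d then F (c div int a, d div int b) else 0) summable_on NZ"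
    by simp
qed



definition phi :: "(int \<Rightarrow> complex) \<Rightarrow> complex \<Rightarrow> nat \<Rightarrow> complex" where
  "phi e s n = e (int (Suc n)) / (of_nat (Suc n) powr (2 * s))"

lemma dirichlet_L_phi: "dirichlet_L e (2 * s) = (\<Sum>n. phi e s n)"
  unfolding dirichlet_L_def phi_def by simp

lemma phi_norm:
  assumes "\<And>n. norm (e n) \<le> 1"
  shows "norm (phi e s n) \<le> real (Suc n) powr (- 2 * Re s)"
proof -
  have "norm (of_nat (Suc n) powr (2 * s) :: complex) = real (Suc n) powr (2 * Re s)"
    by (subst norm_powr_real_powr) auto
  then have "norm (phi e s n) = norm (e (int (Suc n))) / real (Suc n) powr (2 * Re s)"
    unfolding phi_def by (simp add: norm_divide)
  also have "\<dots> \<le> 1 / real (Suc n) powr (2 * Re s)"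
    using assms by (intro divide_right_mono) auto
  also have "\<dots> = real (Suc n) powr (- 2 * Re s)" by (simp add: powr_minus divide_inverse)
  finally show ?thesis .
qed

lemma summable_powr_Suc:
  assumes "\<sigma> > 1"
  shows "summable (\<lambda>n. real (Suc n) powr (- \<sigma>))"
proof -
  have "summable (\<lambda>n. real n powr (-\<sigma>))" using assms by (simp add: summable_real_powr_iff)
  then show ?thesis by (subst summable_Suc_iff)
qed

lemma phi_summable_norm:
  assumes "\<And>n. norm (e n) \<le> 1" "Re s > 1"
  shows "summable (\<lambda>n. norm (phi e s n))"
proof (rule summable_comparison_test'[OF summable_powr_Suc[of "2 * Re s"]])
  show "1 < 2 * Re s" using assms by simp
  fix n show "norm (norm (phi e s n)) \<le> real (Suc n) powr (- (2 * Re s))"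
    using phi_norm[OF assms(1)] by simp
qed

lemma phi_summable_on:
  assumes "\<And>n. norm (e n) \<le> 1" "Re s > 1"
  shows "phi e s summable_on UNIV"
  by (rule norm_summable_imp_summable_on[OF phi_summable_norm[OF assms]])

lemma L_nonzero:
  assumes "\<And>n. norm (e n) \<le> 1" "e 1 = 1" "Re s > 1"
  shows "dirichlet_L e (2 * s) \<noteq> 0"
proof -
  have sn: "summable (\<lambda>n. norm (phi e s n))" by (rule phi_summable_norm[OF assms(1,3)])
  have sp: "summable (phi e s)" using sn summable_norm_cancel by blast
  have sn1: "summable (\<lambda>n. norm (phi e s (Suc n)))" using sn by (subst summable_Suc_iff)
  have p0: "phi e s 0 = 1" unfolding phi_def using assms(2) by simp
  have sq: "(\<lambda>n. 1 / (real n + 1)^2) sums (pi^2 / 6)" using inverse_squares_sums by (simp add: add.commute)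
  have sq1: "(\<lambda>n. 1 / (real (Suc n) + 1)^2) sums (pi^2 / 6 - 1)"
    using sq by (subst sums_Suc_iff) simp
  have bnd: "norm (phi e s (Suc n)) \<le> 1 / (real (Suc n) + 1)^2" for n
  proof -
    have "norm (phi e s (Suc n)) \<le> real (Suc (Suc n)) powr (- 2 * Re s)" by (rule phi_norm[OF assms(1)])
    also have "\<dots> \<le> real (Suc (Suc n)) powr (- 2)" using assms(3) by (intro powr_mono) auto
    also have "\<dots> = 1 / (real (Suc n) + 1)^2" by (simp add: powr_minus divide_inverse add.commute)
    finally show ?thesis .
  qed
  have "norm (\<Sum>n. phi e s (Suc n)) \<le> (\<Sum>n. norm (phi e s (Suc n)))" by (rule summable_norm[OF sn1])
  also have "\<dots> \<le> (\<Sum>n. 1 / (real (Suc n) + 1)^2)"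
    using bnd sn1 sq1 by (intro suminf_le) (auto simp: sums_iff)
  also have "\<dots> = pi^2 / 6 - 1" using sq1 by (simp add: sums_iff)
  also have "\<dots> < 1"
  proof -
    have "pi \<le> 3.2" using pi_approx(2) by simp
    then have "pi * pi \<le> 3.2 * 3.2" using pi_gt_zero by (intro mult_mono) auto
    then have "pi^2 < 12" by (simp add: power2_eq_square)
    then show ?thesis by simp
  qed
  finally have lt: "norm (\<Sum>n. phi e s (Suc n)) < 1" .
  have "dirichlet_L e (2 * s) = 1 + (\<Sum>n. phi e s (Suc n))"
    unfolding dirichlet_L_phi suminf_split_head[OF sp] p0 by simp
  moreover have "1 + (\<Sum>n. phi e s (Suc n)) \<noteq> 0"
  proof
    assume "1 + (\<Sum>n. phi e s (Suc n)) = 0"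
    then have "(\<Sum>n. phi e s (Suc n)) = -1" by (simp add: add_eq_0_iff)
    with lt show False by simp
  qed
  ultimately show ?thesis by simp
qed

lemma Tm_hom:
  assumes "dirichlet_char q1 e1" "dirichlet_char q2 e2"
  shows "Tm k s e1 e2 w0 (int (Suc n) * c, int (Suc n) * d) = phi (\<lambda>n. e1 n * e2 n) s n * Tm k s e1 e2 w0 (c, d)"
proof -
  have w: "of_int (int (Suc n) * c) * w0 + of_int (int (Suc n) * d) = complex_of_real (real (Suc n)) * (of_int c * w0 + of_int d)"
    by (simp add: algebra_simps)
  show ?thesis unfolding Tm_def phi_def fst_conv snd_conv w ker_scale[OF of_nat_0_less_iff[THEN iffD2, OF zero_less_Suc]]
    by (simp add: dc_mult[OF assms(1)] dc_mult[OF assms(2)])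
qed

lemma S1:
  assumes "dirichlet_char q1 e1" "dirichlet_char q2 e2" "Im w0 > 0" "Re s > 1"
  shows "infsum (Tm k s e1 e2 w0) NZ = dirichlet_L (\<lambda>n. e1 n * e2 n) (2 * s) * infsum (Tm k s e1 e2 w0) Cop"
proof -
  have b1: "\<And>n. norm (e1 n) \<le> 1" and b2: "\<And>n. norm (e2 n) \<le> 1" using dc_bound assms(1,2) by blast+
  have b: "norm (e1 n * e2 n) \<le> 1" for n using b1[of n] b2[of n] by (simp add: norm_mult mult_le_one)
  show ?thesis unfolding dirichlet_L_phi
  proof (rule gcd_decomp)
    show "Tm k s e1 e2 w0 summable_on NZ" by (rule Tm_summable[OF assms(3,4) b1 b2])
    show "phi (\<lambda>n. e1 n * e2 n) s summable_on UNIV" by (rule phi_summable_on[OF b assms(4)])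
    fix n c d show "Tm k s e1 e2 w0 (int (Suc n) * c, int (Suc n) * d) = phi (\<lambda>n. e1 n * e2 n) s n * Tm k s e1 e2 w0 (c, d)"
      by (rule Tm_hom[OF assms(1,2)])
  qed
qed



lemma eis_Tm:
  "eisenstein k r e1 e2 z s = 1/2 * (complex_of_real (real r * Im z) powr s) * infsum (Tm k s e1 e2 (of_nat r * z)) Cop"
proof -
  have "(\<lambda>(c::int, d::int). let w = of_int c * of_nat r * z + of_int d in
          complex_of_real (real r * Im z) powr s * e1 c * e2 d / (complex_of_real (cmod w) powr (2 * s)) * (complex_of_real (cmod w) / w) powi k)
      = (\<lambda>p. complex_of_real (real r * Im z) powr s * Tm k s e1 e2 (of_nat r * z) p)"
    by (auto simp: Tm_def ker_def Let_def fun_eq_iff mult.assoc)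
  then show ?thesis unfolding eisenstein_def Cop_def by (simp add: infsum_cmult_right' mult.assoc)
qed

lemma key_powr:
  fixes a b :: nat and t u :: real
  assumes "a > 0" "b > 0" "t > 0" "u > 0"
  shows "complex_of_real (u * (real a / (real b * u) * t)) powr s
       = complex_of_real t powr s * (of_nat (a * b) powr s) / (complex_of_real (real b) powr (2 * s))"
proof -
  define Aa where "Aa = complex_of_real (real a) powr s"
  define Bb where "Bb = complex_of_real (real b) powr s"
  define Ib where "Ib = complex_of_real (1 / real b) powr s"
  define T where "T = complex_of_real t powr s"
  have Bb0: "Bb \<noteq> 0" unfolding Bb_def using assms by simp
  have "Ib * Bb = complex_of_real (1 / real b * real b) powr s"
    unfolding Ib_def Bb_def using assms by (subst cpowr_mult) auto
  also have "\<dots> = 1" using assms by simp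
  finally have Ib: "Ib = 1 / Bb" using Bb0 by (simp add: eq_divide_eq)
  have e: "u * (real a / (real b * u) * t) = t * real a * (1 / real b)" using assms by (simp add: field_simps)
  have "complex_of_real (t * real a * (1 / real b)) powr s = complex_of_real (t * real a) powr s * complex_of_real (1 / real b) powr s"
    by (rule cpowr_mult) (use assms in auto)
  also have "complex_of_real (t * real a) powr s = complex_of_real t powr s * complex_of_real (real a) powr s"
    by (rule cpowr_mult) (use assms in auto)
  finally have X: "complex_of_real (u * (real a / (real b * u) * t)) powr s = T * Aa * Ib"
    unfolding e Aa_def Ib_def T_def .
  have Y: "(of_nat (a * b) :: complex) powr s = Aa * Bb"
  proof -
    have "(of_nat (a * b) :: complex) = complex_of_real (real a * real b)" by simp
    then show ?thesis unfolding Aa_def Bb_def by (simp only: cpowr_mult[OF of_nat_0_le_iff of_nat_0_le_iff])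
  qed
  have Z: "complex_of_real (real b) powr (2 * s) = Bb * Bb"
    unfolding Bb_def by (simp only: powr_add[symmetric] mult_2)
  have W: "T * Aa * Ib = T * (Aa * Bb) / (Bb * Bb)"
    unfolding Ib using Bb0 by simp
  show ?thesis unfolding X Y Z T_def[symmetric] by (rule W)
qed

lemma alg:
  fixes AB Bb2 Lc P m Ls I :: complex
  assumes "AB \<noteq> 0" "Bb2 \<noteq> 0" "Lc \<noteq> 0"
  shows "1/2 * P * (m / Bb2 * (Ls * I) / Lc) = Ls / Lc * (m / AB * (1/2 * (P * AB / Bb2) * I))"
  using assms by (simp add: field_simps)

theorem lemma5p1:
  fixes k :: int and q1 q2 q1s q2s :: nat
    and chi1 chi2 chi1s chi2s :: "int \<Rightarrow> complex"
    and z s :: complex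
  assumes "dirichlet_char q1 chi1" and "dirichlet_char q2 chi2"
    and "primitive_char q1s chi1s" and "primitive_char q2s chi2s"
    and "induced_char q1 chi1 q1s chi1s" and "induced_char q2 chi2 q2s chi2s"
    and "chi1 (-1) * chi2 (-1) = (-1) powi k"
    and "Im z > 0" and "Re s > 1"
  shows "eisenstein k q2 chi1 chi2 z s =
    dirichlet_L (\<lambda>n. chi1s n * chi2s n) (2 * s) / dirichlet_L (\<lambda>n. chi1 n * chi2 n) (2 * s)
    * (\<Sum>a | a dvd q1. \<Sum>b | b dvd q2.
        of_int (moebius_mu a) * chi1s (int a) * of_int (moebius_mu b) * chi2s (int b)
          / (of_nat (a * b) powr s)
          * eisenstein k q2s chi1s chi2s
              (complex_of_real (real (a * q2) / real (b * q2s)) * z) s)"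
proof -
  have q1: "q1 > 0" and q2: "q2 > 0" using assms(1,2) by (auto simp: dirichlet_char_def)
  have d1s: "dirichlet_char q1s chi1s" and d2s: "dirichlet_char q2s chi2s"
    using assms(5,6) by (auto simp: induced_char_def)
  have q2s: "q2s > 0" using d2s by (auto simp: dirichlet_char_def)
  have b1s: "\<And>n. norm (chi1s n) \<le> 1" using dc_bound[OF d1s] by blast
  have b2s: "\<And>n. norm (chi2s n) \<le> 1" using dc_bound[OF d2s] by blast
  define y where "y = Im z"
  have y: "y > 0" using assms(8) y_def by simp
  define W where "W = of_nat q2 * z"
  have ImW: "Im W > 0" using q2 y by (simp add: W_def y_def)
  define W' where "W' = (\<lambda>a b::nat. complex_of_real (real a * real q2 / real b) * z)"
  have ImW': "Im (W' a b) > 0" if "a > 0" "b > 0" for a b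
    using that q2 y by (simp add: W'_def y_def)
  define m where "m = (\<lambda>a b::nat. of_int (moebius_mu a) * chi1s (int a) * of_int (moebius_mu b) * chi2s (int b))"
  define H where "H = (\<lambda>a b (c::int, d::int). m a b * (chi1s c * chi2s d * ker k s (of_int (int a * c) * W + of_int (int b * d))))"
  define Lc where "Lc = dirichlet_L (\<lambda>n. chi1 n * chi2 n) (2 * s)"
  define Ls where "Ls = dirichlet_L (\<lambda>n. chi1s n * chi2s n) (2 * s)"
  define A where "A = {a. a dvd q1}"
  define B where "B = {b. b dvd q2}"
  have finA: "finite A" unfolding A_def using q1 by (simp add: finite_divisors_nat)
  have finB: "finite B" unfolding B_def using q2 by (simp add: finite_divisors_nat)
  have Apos: "a > 0" if "a \<in> A" for a using that q1 unfolding A_def by (auto intro: Nat.gr0I)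
  have Bpos: "b > 0" if "b \<in> B" for b using that q2 unfolding B_def by (auto intro: Nat.gr0I)
  have Lc0: "Lc \<noteq> 0" unfolding Lc_def
  proof (rule L_nonzero[OF _ _ assms(9)])
    fix n show "norm (chi1 n * chi2 n) \<le> 1"
      using dc_bound[OF assms(1), of n] dc_bound[OF assms(2), of n] by (simp add: norm_mult mult_le_one)
    show "chi1 1 * chi2 1 = 1" using dc_1[OF assms(1)] dc_1[OF assms(2)] by simp
  qed
  have EA: "eisenstein k q2 chi1 chi2 z s = 1/2 * complex_of_real (real q2 * y) powr s * infsum (Tm k s chi1 chi2 W) Cop"
    unfolding eis_Tm W_def y_def ..
  have EB: "infsum (Tm k s chi1 chi2 W) NZ = Lc * infsum (Tm k s chi1 chi2 W) Cop"
    unfolding Lc_def by (rule S1[OF assms(1,2) ImW assms(9)])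
  have EC: "Tm k s chi1 chi2 W p = (\<Sum>a\<in>A. \<Sum>b\<in>B. (\<lambda>(c, d). if int a dvd c \<and> int b dvd d then H a b (c div int a, d div int b) else 0) p)" for p
  proof -
    obtain c d where p: "p = (c, d)" by (cases p)
    have "Tm k s chi1 chi2 W p = chi1 c * chi2 d * ker k s (of_int c * W + of_int d)" unfolding Tm_def p by simp
    also have "chi1 c * chi2 d = (\<Sum>a\<in>A. \<Sum>b\<in>B.
         (if int a dvd c then of_int (moebius_mu a) * chi1s (int a) * chi1s (c div int a) else 0) *
         (if int b dvd d then of_int (moebius_mu b) * chi2s (int b) * chi2s (d div int b) else 0))"
      unfolding induced_expand[OF assms(5), of c] induced_expand[OF assms(6), of d] A_def B_def
      by (simp add: sum_product)
    also have "\<dots> * ker k s (of_int c * W + of_int d) = (\<Sum>a\<in>A. \<Sum>b\<in>B.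
         (if int a dvd c then of_int (moebius_mu a) * chi1s (int a) * chi1s (c div int a) else 0) *
         (if int b dvd d then of_int (moebius_mu b) * chi2s (int b) * chi2s (d div int b) else 0) * ker k s (of_int c * W + of_int d))"
      by (simp add: sum_distrib_right)
    also have "\<dots> = (\<Sum>a\<in>A. \<Sum>b\<in>B. (\<lambda>(c, d). if int a dvd c \<and> int b dvd d then H a b (c div int a, d div int b) else 0) p)"
    proof (intro sum.cong refl)
      fix a b assume "a \<in> A" "b \<in> B"
      show "(if int a dvd c then of_int (moebius_mu a) * chi1s (int a) * chi1s (c div int a) else 0) *
         (if int b dvd d then of_int (moebius_mu b) * chi2s (int b) * chi2s (d div int b) else 0) * ker k s (of_int c * W + of_int d)
         = (\<lambda>(c, d). if int a dvd c \<and> int b dvd d then H a b (c div int a, d div int b) else 0) p"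
      proof (cases "int a dvd c \<and> int b dvd d")
        case True
        then have "int a * (c div int a) = c" "int b * (d div int b) = d" by auto
        then have c': "(of_int c :: complex) = of_nat a * of_int (c div int a)"
          and d': "(of_int d :: complex) = of_nat b * of_int (d div int b)"
          by (metis of_int_mult of_int_of_nat_eq)+
        show ?thesis using True unfolding p H_def m_def by (simp add: mult_ac c' d')
      next
        case False then show ?thesis unfolding p by auto
      qed
    qed
    finally show ?thesis .
  qed
  have EH: "H a b = (\<lambda>p. m a b / (complex_of_real (real b) powr (2 * s)) * Tm k s chi1s chi2s (W' a b) p)"
    if "a > 0" "b > 0" for a b
  proof
    fix p :: "int \<times> int"
    obtain c d where p: "p = (c, d)" by (cases p)
    have w: "of_int (int a * c) * W + of_int (int b * d) = complex_of_real (real b) * (of_int c * W' a b + of_int d)"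
      using that by (simp add: W'_def W_def field_simps)
    show "H a b p = m a b / (complex_of_real (real b) powr (2 * s)) * Tm k s chi1s chi2s (W' a b) p"
      unfolding H_def p Tm_def fst_conv snd_conv case_prod_conv w ker_scale[OF of_nat_0_less_iff[THEN iffD2, OF that(2)]]
      by (simp add: field_simps)
  qed
  have sumH: "H a b summable_on NZ" if "a > 0" "b > 0" for a b
    unfolding EH[OF that]
    by (rule summable_on_cmult_right[OF Tm_summable[OF ImW'[OF that] assms(9) b1s b2s]])
  have ED: "infsum (Tm k s chi1 chi2 W) NZ = (\<Sum>a\<in>A. \<Sum>b\<in>B. infsum (H a b) NZ)"
  proof -
    have "((\<lambda>p. \<Sum>a\<in>A. \<Sum>b\<in>B. (\<lambda>(c, d). if int a dvd c \<and> int b dvd d then H a b (c div int a, d div int b) else 0) p)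
           has_sum (\<Sum>a\<in>A. \<Sum>b\<in>B. infsum (H a b) NZ)) NZ"
    proof (intro has_sum_finite_sum finA finB)
      fix a b assume ab: "a \<in> A" "b \<in> B"
      have s: "(\<lambda>(c, d). if int a dvd c \<and> int b dvd d then H a b (c div int a, d div int b) else 0) summable_on NZ"
        by (rule scale_sum(2)[OF Apos[OF ab(1)] Bpos[OF ab(2)] sumH[OF Apos[OF ab(1)] Bpos[OF ab(2)]]])
      show "((\<lambda>(c, d). if int a dvd c \<and> int b dvd d then H a b (c div int a, d div int b) else 0) has_sum infsum (H a b) NZ) NZ"
        using has_sum_infsum[OF s] scale_sum(1)[OF Apos[OF ab(1)] Bpos[OF ab(2)], of "H a b"] by simp
    qed
    note hs = this
    have fe: "Tm k s chi1 chi2 W = (\<lambda>p. \<Sum>a\<in>A. \<Sum>b\<in>B. (\<lambda>(c, d). if int a dvd c \<and> int b dvd d then H a b (c div int a, d div int b) else 0) p)"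
      by (rule ext) (rule EC)
    show ?thesis unfolding fe by (rule infsumI[OF hs])
  qed
  have EE: "infsum (H a b) NZ = m a b / (complex_of_real (real b) powr (2 * s)) * (Ls * infsum (Tm k s chi1s chi2s (W' a b)) Cop)"
    if "a > 0" "b > 0" for a b
    unfolding EH[OF that] infsum_cmult_right' Ls_def S1[OF d1s d2s ImW'[OF that] assms(9)] ..
  have EF: "eisenstein k q2s chi1s chi2s (complex_of_real (real (a * q2) / real (b * q2s)) * z) s
      = 1/2 * complex_of_real (real q2s * (real a * real q2 / (real b * real q2s) * y)) powr s * infsum (Tm k s chi1s chi2s (W' a b)) Cop"
    if "a > 0" "b > 0" for a b
  proof -
    have "of_nat q2s * (complex_of_real (real (a * q2) / real (b * q2s)) * z) = W' a b"
      using q2s that by (simp add: W'_def field_simps)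
    then show ?thesis unfolding eis_Tm y_def by simp
  qed
  have LHS: "eisenstein k q2 chi1 chi2 z s = (\<Sum>a\<in>A. \<Sum>b\<in>B.
      1/2 * complex_of_real (real q2 * y) powr s * (m a b / (complex_of_real (real b) powr (2 * s)) * (Ls * infsum (Tm k s chi1s chi2s (W' a b)) Cop) / Lc))"
  proof -
    have "infsum (Tm k s chi1 chi2 W) Cop = infsum (Tm k s chi1 chi2 W) NZ / Lc" using EB Lc0 by simp
    also have "\<dots> = (\<Sum>a\<in>A. \<Sum>b\<in>B. m a b / (complex_of_real (real b) powr (2 * s)) * (Ls * infsum (Tm k s chi1s chi2s (W' a b)) Cop)) / Lc"
      unfolding ED using Apos Bpos EE by (intro arg_cong[where f = "\<lambda>x. x / Lc"] sum.cong refl) auto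
    finally show ?thesis unfolding EA by (simp only: sum_distrib_left sum_divide_distrib)
  qed
  show ?thesis
    unfolding LHS Lc_def[symmetric] Ls_def[symmetric] A_def[symmetric] B_def[symmetric] sum_distrib_left
  proof (intro sum.cong refl)
    fix a b assume ab: "a \<in> A" "b \<in> B"
    have a0: "a > 0" and b0: "b > 0" using Apos[OF ab(1)] Bpos[OF ab(2)] .
    define P where "P = complex_of_real (real q2 * y) powr s"
    define Bb2 where "Bb2 = complex_of_real (real b) powr (2 * s)"
    define AB where "AB = (of_nat (a * b) :: complex) powr s"
    define I where "I = infsum (Tm k s chi1s chi2s (W' a b)) Cop"
    have mab: "m a b = of_int (moebius_mu a) * chi1s (int a) * of_int (moebius_mu b) * chi2s (int b)"
      by (simp add: m_def)
    have Bb20: "Bb2 \<noteq> 0" unfolding Bb2_def using b0 by simp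
    have AB0: "AB \<noteq> 0" unfolding AB_def using a0 b0 by simp
    have key: "complex_of_real (real q2s * (real a * real q2 / (real b * real q2s) * y)) powr s = P * AB / Bb2"
    proof -
      have e: "real q2s * (real a * real q2 / (real b * real q2s) * y) = real q2s * (real a / (real b * real q2s) * (real q2 * y))"
        by (simp add: field_simps)
      have q2y: "real q2 * y > 0" using q2 y by simp
      have q2s': "real q2s > 0" using q2s by simp
      show ?thesis unfolding e P_def AB_def Bb2_def
        by (rule key_powr[OF a0 b0 q2y q2s'])
    qed
    show "1/2 * complex_of_real (real q2 * y) powr s * (m a b / (complex_of_real (real b) powr (2 * s)) * (Ls * infsum (Tm k s chi1s chi2s (W' a b)) Cop) / Lc)
      = Ls / Lc * (of_int (moebius_mu a) * chi1s (int a) * of_int (moebius_mu b) * chi2s (int b) / (of_nat (a * b) powr s)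
          * eisenstein k q2s chi1s chi2s (complex_of_real (real (a * q2) / real (b * q2s)) * z) s)"
      unfolding EF[OF a0 b0] key mab[symmetric] P_def[symmetric] Bb2_def[symmetric] AB_def[symmetric] I_def[symmetric]
      by (rule alg[OF AB0 Bb20 Lc0])
  qed
qed


end
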